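(* Let $n$ be a positive integer, $q=2^n$, $a_1\in\mathbb{F}_q^{*}$ and $b\in\mathbb{F}_{q^2}^{*}$. Define the Boolean function $h_1:\mathbb{F}_{q^2}\to\mathbb{F}_2$ by $h_1(x)=\mathrm{Tr}_1^{2n}\!\left(\frac{a_1}{x^{q-1}+b}\right)$. Then $h_1$ is bent if and only if one of the following conditions holds: (1) $b\in U\setminus\{1\}$ and $\mathrm{Tr}_1^{2n}\!\left(\frac{a_1}{b}\right)=0$; (2) $b\in\mathbb{F}_{q^2}^{*}\setminus U$, $\mathcal{K}_n\!\left(\frac{a_1}{1+b\overline{b}}\right)=0$ and $\mathrm{Tr}_1^{n}\!\left(\frac{a_1(b+\overline{b})}{(1+b\overline{b})\,b\overline{b}}\right)=0$.
   Context: For $k\mid m$, $\mathrm{Tr}_k^{m}(x)=x+x^{2^k}+\cdots+x^{2^{(m/k-1)k}}$ is the trace from $\mathbb{F}_{2^m}$ to $\mathbb{F}_{2^k}$. For $x\in\mathbb{F}_{q^2}$ ($q=2^n$) write $\overline{x}=x^{q}$. The unit circle is $U=\{\eta\in\mathbb{F}_{q^2}:\eta^{q+1}=1\}$. Division by zero is interpreted with the convention $\frac{1}{0}=0$ (i.e. $z^{-1}$ means $z^{q^2-2}$). The binary Kloosterman sum is $\mathcal{K}_n(a)=\sum_{x\in\mathbb{F}_{2^n}}(-1)^{\mathrm{Tr}_1^n(\frac1x+ax)}$ (with $\frac10=0$). A Boolean function $f:\mathbb{F}_{2^{m}}\to\mathbb{F}_2$ is bent if its Walsh transform $W_f(\omega)=\sum_{x\in\mathbb{F}_{2^m}}(-1)^{f(x)+\mathrm{Tr}_1^m(\omega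 x)}$ satisfies $W_f(\omega)^2=2^m$ for all $\omega\in\mathbb{F}_{2^m}$. *)

theory Defs
  imports Main
begin

definition tr :: "nat \<Rightarrow> nat \<Rightarrow> 'a::field \<Rightarrow> 'a" where
  "tr k m x = (\<Sum>i<m div k. x ^ (2 ^ (i * k)))"

definition chi :: "'a::field \<Rightarrow> int" where
  "chi y = (if y = 0 then 1 else -1)"

text \<open>Walsh transform of f : GF(2^m) -> GF(2) (values 0/1 inside the field).\<close>
definition walsh :: "nat \<Rightarrow> ('a::{field,finite} \<Rightarrow> 'a) \<Rightarrow> 'a \<Rightarrow> int" where
  "walsh m f w = (\<Sum>x\<in>UNIV. chi (f x + tr 1 m (w * x)))"

definition bent :: "nat \<Rightarrow> ('a::{field,finite} \<Rightarrow> 'a) \<Rightarrow> bool" where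
  "bent m f \<longleftrightarrow> (\<forall>w. (walsh m f w)\<^sup>2 = 2 ^ m)"

definition subF :: "nat \<Rightarrow> 'a::field set" where
  "subF n = {x. x ^ (2 ^ n) = x}"

definition unit_circle :: "nat \<Rightarrow> 'a::field set" where
  "unit_circle n = {eta. eta ^ (2 ^ n + 1) = 1}"

text \<open>Binary Kloosterman sum over the subfield GF(2^n); inverse 0 = 0 in Isabelle.\<close>
definition kloosterman :: "nat \<Rightarrow> 'a::{field,finite} \<Rightarrow> int" where
  "kloosterman n a = (\<Sum>x\<in>subF n. chi (tr 1 n (inverse x + a * x)))"

end

theory Submission
  imports Defs "HOL-Computational_Algebra.Polynomial"
begin

locale gf =
  fixes n :: nat and ty :: "'a::{field,finite} itself"
  assumes npos: "n > 0" and cardF: "card (UNIV::'a set) = 2 ^ (2 * n)"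
begin

lemma char2: "(2::'a) = 0"
proof -
  have "(\<Sum>x\<in>UNIV. x + 1) = (\<Sum>x\<in>UNIV. (x::'a))"
    by (rule sum.reindex_bij_witness[of _ "\<lambda>x. x - 1" "\<lambda>x. x+1"]) auto
  hence "of_nat (card (UNIV::'a set)) = (0::'a)"
    by (simp add: sum.distrib)
  hence "(2::'a) ^ (2*n) = 0" using cardF by simp
  thus ?thesis by simp
qed

lemma add_self[simp]: "(x::'a) + x = 0"
proof -
  have "x + x = 2 * x" by simp
  thus ?thesis using char2 by simp
qed

lemma minus_self[simp]: "- (x::'a) = x"
  using add_self[of x] by (metis add_eq_0_iff)

lemma diff_is_add: "(x::'a) - y = x + y"
  by (metis diff_conv_add_uminus minus_self)

lemma sq_add: "((x::'a) + y)^2 = x^2 + y^2"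
  using char2 by (simp add: power2_sum)

lemma pow2k_add: "((x::'a) + y)^(2^k) = x^(2^k) + y^(2^k)"
proof (induction k)
  case 0 then show ?case by simp
next
  case (Suc k)
  have "(x+y)^(2^Suc k) = ((x+y)^(2^k))^2" by (simp add: power_mult[symmetric] mult.commute)
  also have "\<dots> = (x^(2^k))^2 + (y^(2^k))^2" using Suc sq_add by simp
  also have "\<dots> = x^(2^Suc k) + y^(2^Suc k)" by (simp add: power_mult[symmetric] mult.commute)
  finally show ?case .
qed

lemma pow2k_sum: "(\<Sum>i\<in>A. f i :: 'a)^(2^k) = (\<Sum>i\<in>A. (f i)^(2^k))"
proof (induction A rule: infinite_finite_induct)
  case (infinite A) then show ?case by simp
next
  case empty then show ?case by simp
next
  case (insert x F) then show ?case by (simp add: pow2k_add)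
qed

lemma fermat: "(x::'a) ^ (2^(2*n)) = x"
proof (cases "x = 0")
  case True then show ?thesis by simp
next
  case False
  let ?S = "UNIV - {0::'a}"
  have "(\<Prod>y\<in>?S. x * y) = (\<Prod>y\<in>?S. y)"
    by (rule prod.reindex_bij_witness[of _ "\<lambda>y. y / x" "\<lambda>y. x * y"]) (use False in auto)
  hence "x ^ card ?S * (\<Prod>y\<in>?S. y) = (\<Prod>y\<in>?S. y)"
    by (simp add: prod.distrib)
  moreover have "(\<Prod>y\<in>?S. y) \<noteq> 0" by simp
  ultimately have "x ^ card ?S = 1" by simp
  moreover have "card ?S = 2^(2*n) - 1" using cardF by (simp add: card_Diff_singleton)
  ultimately have "x ^ (2^(2*n) - 1) = 1" by simp
  hence "x * x ^ (2^(2*n) - 1) = x" by simp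
  moreover have "Suc (2^(2*n) - 1) = 2^(2*n)" by simp
  ultimately show ?thesis by (metis power_Suc)
qed


abbreviation cj :: "'a \<Rightarrow> 'a" where "cj x \<equiv> x ^ (2^n)"

lemma sum_split_nat: "(\<Sum>i<k+m. f i) = (\<Sum>i<k. f i) + (\<Sum>i<m. f (k+i))"
  for f :: "nat \<Rightarrow> 'b::comm_monoid_add"
  by (induction m) (simp_all add: add.assoc)

lemma cj_add: "cj (x + y) = cj x + cj y" by (rule pow2k_add)
lemma cj_mult: "cj (x * y) = cj x * cj y" by (simp add: power_mult_distrib)
lemma cj_div: "cj (x / y) = cj x / cj y" by (simp add: power_divide)
lemma cj_inv: "cj (inverse x) = inverse (cj x)" by (simp add: power_inverse)
lemma cj_cj: "cj (cj x) = x"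
proof -
  have "cj (cj x) = x ^ (2^n * 2^n)" by (simp add: power_mult)
  also have "2^n * 2^n = (2::nat)^(2*n)" by (simp add: power_add[symmetric] mult_2)
  finally show ?thesis using fermat by simp
qed
lemma cj_0: "cj 0 = 0" by simp
lemma cj_1: "cj 1 = 1" by simp
lemma cj_eq0: "cj x = 0 \<longleftrightarrow> x = 0" by simp

definition trS :: "nat \<Rightarrow> 'a \<Rightarrow> 'a" where "trS m x = (\<Sum>i<m. x^(2^i))"
definition T1 :: "'a \<Rightarrow> 'a" where "T1 x = trS n x"
definition T2 :: "'a \<Rightarrow> 'a" where "T2 x = trS (2*n) x"

lemma tr_T1: "tr 1 n x = T1 x" by (simp add: tr_def T1_def trS_def)
lemma tr_T2: "tr 1 (2*n) x = T2 x" by (simp add: tr_def T2_def trS_def)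

lemma trS_add: "trS m (x + y) = trS m x + trS m y"
  by (simp add: trS_def pow2k_add sum.distrib)

lemma trS_zero: "trS m 0 = 0" by (simp add: trS_def power_0_left)

lemma trS_sq: assumes "(x::'a)^(2^m) = x" shows "(trS m x)^2 = trS m x"
proof -
  have "(trS m x)^2 = (\<Sum>i<m. x^(2^i))^(2^1)" by (simp add: trS_def)
  also have "\<dots> = (\<Sum>i<m. (x^(2^i))^(2^1))" by (rule pow2k_sum)
  also have "\<dots> = (\<Sum>i<m. x^(2^(Suc i)))"
    by (simp add: power_mult[symmetric] mult.commute)
  also have "\<dots> = trS m x"
  proof -
    have "(\<Sum>i<Suc m. x^(2^i)) = x^(2^0) + (\<Sum>i<m. x^(2^(Suc i)))" by (rule sum.lessThan_Suc_shift)
    moreover have "(\<Sum>i<Suc m. x^(2^i)) = (\<Sum>i<m. x^(2^i)) + x^(2^m)" by simp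
    ultimately show ?thesis using assms by (simp add: trS_def)
  qed
  finally show ?thesis .
qed

lemma trS01: assumes "(x::'a)^(2^m) = x" shows "trS m x = 0 \<or> trS m x = 1"
proof -
  have "trS m x * (trS m x - 1) = 0" using trS_sq[OF assms] by (simp add: algebra_simps power2_eq_square)
  thus ?thesis by simp
qed

lemma T2_eq: "T2 x = T1 (x + cj x)"
proof -
  have "T2 x = (\<Sum>i<n+n. x^(2^i))" by (simp add: T2_def trS_def mult_2)
  also have "\<dots> = (\<Sum>i<n. x^(2^i)) + (\<Sum>i<n. x^(2^(n+i)))" by (rule sum_split_nat)
  also have "(\<Sum>i<n. x^(2^(n+i))) = (\<Sum>i<n. (cj x)^(2^i))"
    by (simp add: power_mult[symmetric] power_add)
  finally show ?thesis by (simp add: T1_def trS_def pow2k_add sum.distrib)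
qed

lemma T1_add: "T1 (x + y) = T1 x + T1 y" by (simp add: T1_def trS_add)
lemma T2_add: "T2 (x + y) = T2 x + T2 y" by (simp add: T2_def trS_add)
lemma T1_0[simp]: "T1 0 = 0" by (simp add: T1_def trS_zero)
lemma T2_0[simp]: "T2 0 = 0" by (simp add: T2_def trS_zero)

lemma T2_01: "T2 (x::'a) = 0 \<or> T2 x = 1"
  unfolding T2_def by (rule trS01) (rule fermat)

lemma subF_iff: "x \<in> subF n \<longleftrightarrow> cj x = x" by (simp add: subF_def)

lemma T1_01: "x \<in> subF n \<Longrightarrow> T1 (x::'a) = 0 \<or> T1 x = 1"
  unfolding T1_def by (rule trS01) (simp add: subF_iff)

lemma trace_in_subF: "x + cj x \<in> subF n" by (simp add: subF_iff cj_add cj_cj add.commute)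

lemma T2_cj: "T2 (cj x) = T2 x"
  by (simp add: T2_eq cj_cj add.commute)

lemma T2_F: "t \<in> subF n \<Longrightarrow> T2 (t * z) = T1 (t * (z + cj z))"
  by (simp add: T2_eq subF_iff cj_mult distrib_left)

lemma subF_add: "(x::'a) \<in> subF n \<Longrightarrow> y \<in> subF n \<Longrightarrow> x + y \<in> subF n" by (simp add: subF_iff cj_add)
lemma subF_mult: "(x::'a) \<in> subF n \<Longrightarrow> y \<in> subF n \<Longrightarrow> x * y \<in> subF n" by (simp add: subF_iff cj_mult)
lemma subF_div: "(x::'a) \<in> subF n \<Longrightarrow> y \<in> subF n \<Longrightarrow> x / y \<in> subF n" by (simp add: subF_iff cj_div)
lemma subF_inv: "(x::'a) \<in> subF n \<Longrightarrow> inverse x \<in> subF n" by (simp add: subF_iff cj_inv)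
lemma subF_0: "(0::'a) \<in> subF n" by (simp add: subF_iff)
lemma subF_1: "(1::'a) \<in> subF n" by (simp add: subF_iff)

lemma U_iff: "x \<in> unit_circle n \<longleftrightarrow> x * cj x = 1"
  by (simp add: unit_circle_def power_add mult.commute)

lemma U_cj: "u \<in> unit_circle n \<Longrightarrow> cj u = inverse u"
  by (metis inverse_unique U_iff)

lemma U_nz: "(u::'a) \<in> unit_circle n \<Longrightarrow> u \<noteq> 0"
  by (auto simp: U_iff)


lemma add_eq0_iff: "(x::'a) + y = 0 \<longleftrightarrow> x = y"
  by (metis add_eq_0_iff minus_self)

lemma root_bound:
  assumes "k \<ge> 2"
  shows "card {x::'a. x^k + a * x = c} \<le> k"
proof -
  let ?p = "monom (1::'a) k + [:c, a:]"
  have "degree [:c, a:] \<le> 1" by (rule order.trans[OF degree_pCons_le]) simp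
  hence dq: "degree [:c, a:] < k" using assms by linarith
  hence deg: "degree ?p = k" by (simp add: degree_add_eq_left degree_monom_eq)
  have "?p \<noteq> 0"
  proof
    assume "?p = 0" hence "degree ?p = 0" by simp
    thus False using deg assms by simp
  qed
  hence "card {x. poly ?p x = 0} \<le> degree ?p" by (rule card_poly_roots_bound)
  moreover have "{x. poly ?p x = 0} = {x::'a. x^k + a * x = c}"
  proof -
    have "\<And>x. poly ?p x = (x^k + a * x) + c" by (simp add: poly_monom mult.commute add.assoc add.left_commute)
    thus ?thesis by (simp only: add_eq0_iff)
  qed
  ultimately show ?thesis using deg by simp
qed

lemma double_count:
  assumes fA: "finite A" and fB: "finite B" and img: "f ` A \<subseteq> B"
    and cB: "card B \<le> m" and fib: "\<And>y. y \<in> B \<Longrightarrow> card {x\<in>A. f x = y} \<le> k"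
    and cA: "m * k \<le> card A" and kpos: "k > 0"
  shows "(\<forall>y\<in>B. card {x\<in>A. f x = y} = k) \<and> card B = m"
proof -
  have cAs: "card A = (\<Sum>y\<in>B. card {x\<in>A. f x = y})"
  proof -
    have "card A = (\<Sum>x\<in>A. 1)" by simp
    also have "\<dots> = (\<Sum>y\<in>B. \<Sum>x\<in>{x\<in>A. f x = y}. 1)" by (rule sum.group[symmetric, OF fA fB img])
    finally show ?thesis by simp
  qed
  have le: "(\<Sum>y\<in>B. card {x\<in>A. f x = y}) \<le> (\<Sum>y\<in>B. k)" by (rule sum_mono) (rule fib)
  have 1: "card B * k \<le> m * k" using cB by (rule mult_le_mono1)
  have le': "(\<Sum>y\<in>B. card {x\<in>A. f x = y}) \<le> card B * k" using le by simp
  have eqsum': "(\<Sum>y\<in>B. card {x\<in>A. f x = y}) = card B * k"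
    using le' 1 cA cAs by linarith
  hence eqsum: "(\<Sum>y\<in>B. card {x\<in>A. f x = y}) = (\<Sum>y\<in>B. k)" by simp
  have all: "\<forall>y\<in>B. card {x\<in>A. f x = y} = k"
  proof (rule ccontr)
    assume "\<not> ?thesis"
    then obtain y where "y \<in> B" "card {x\<in>A. f x = y} \<noteq> k" by blast
    hence "card {x\<in>A. f x = y} < k" using fib by (meson le_neq_implies_less)
    hence "(\<Sum>y\<in>B. card {x\<in>A. f x = y}) < (\<Sum>y\<in>B. k)"
      using fib \<open>y \<in> B\<close> fB by (intro sum_strict_mono_ex1) auto
    thus False using eqsum by simp
  qed
  moreover have "m * k = card B * k" using eqsum' 1 cA cAs by linarith
  hence "card B = m" using kpos by simp
  ultimately show ?thesis by blast
qed

lemma q_ge2: "(2::nat) \<le> 2^n" using npos by (cases n) simp_all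

lemma cardF': "card (UNIV::'a set) = 2^n * 2^n"
  using cardF by (simp add: power_add[symmetric] mult_2)

lemma subF_le: "card (subF n :: 'a set) \<le> 2^n"
proof -
  have "subF n = {x::'a. x^(2^n) + 1 * x = 0}" unfolding subF_def using add_eq0_iff by simp
  thus ?thesis using root_bound[OF q_ge2, of 1 0] by simp
qed

lemma trmap_fib_le: "card {x::'a. x + cj x = s} \<le> 2^n"
proof -
  have "{x::'a. x + cj x = s} = {x. x^(2^n) + 1 * x = s}" by (auto simp: add.commute)
  thus ?thesis using root_bound[OF q_ge2, of 1 s] by simp
qed

lemma trmap_count:
  "(\<forall>y\<in>subF n. card {x::'a. x \<in> UNIV \<and> x + cj x = y} = 2^n) \<and> card (subF n :: 'a set) = 2^n"
proof (rule double_count[where f="\<lambda>x. x + cj x"])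
  show "(\<lambda>x::'a. x + cj x) ` UNIV \<subseteq> subF n" using trace_in_subF by blast
  show "2 ^ n * 2 ^ n \<le> card (UNIV::'a set)" using cardF' by simp
  show "card {x \<in> UNIV. x + cj x = y} \<le> 2 ^ n" for y::'a using trmap_fib_le[of y] by simp
qed (simp_all add: subF_le)

lemma card_subF: "card (subF n :: 'a set) = 2^n" using trmap_count by blast

lemma trmap_surj: "y \<in> subF n \<Longrightarrow> \<exists>x::'a. x + cj x = y"
proof -
  assume "y \<in> subF n"
  hence "card {x::'a. x \<in> UNIV \<and> x + cj x = y} = 2^n" using trmap_count by blast
  hence "{x::'a. x \<in> UNIV \<and> x + cj x = y} \<noteq> {}" by (intro notI) simp
  thus ?thesis by blast
qed


lemma T1_poly: "\<exists>p. p \<noteq> 0 \<and> degree p \<le> 2^(n-1) \<and> (\<forall>x::'a. poly p x = T1 x)"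
proof -
  let ?p = "(\<Sum>i<n. monom (1::'a) (2^i))"
  have "poly ?p x = T1 x" for x by (simp add: poly_sum poly_monom T1_def trS_def)
  moreover have "degree ?p \<le> 2^(n-1)"
  proof (rule degree_sum_le)
    fix i assume "i \<in> {..<n}"
    hence "i \<le> n - 1" by auto
    hence "(2::nat)^i \<le> 2^(n-1)" by (rule power_increasing) simp
    thus "degree (monom (1::'a) (2^i)) \<le> 2^(n-1)" by (simp add: degree_monom_eq)
  qed simp
  moreover have "coeff ?p (2^(n-1)) = 1"
  proof -
    have "coeff ?p (2^(n-1)) = (\<Sum>i<n. if i = n - 1 then 1 else 0)"
      by (simp add: coeff_sum coeff_monom power_inject_exp)
    also have "\<dots> = 1" using npos by simp
    finally show ?thesis .
  qed
  hence "?p \<noteq> 0" by auto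
  ultimately show ?thesis by blast
qed

lemma T1_nonzero: "\<exists>t\<in>subF n. T1 (t::'a) = 1"
proof (rule ccontr)
  assume "\<not> ?thesis"
  hence "\<forall>t\<in>subF n. T1 (t::'a) = 0" using T1_01 by blast
  obtain p where p: "p \<noteq> 0" "degree p \<le> 2^(n-1)" "\<forall>x::'a. poly p x = T1 x" using T1_poly by blast
  have "subF n \<subseteq> {x::'a. poly p x = 0}" using p(3) \<open>\<forall>t\<in>subF n. T1 t = 0\<close> by auto
  hence "card (subF n :: 'a set) \<le> card {x::'a. poly p x = 0}" by (rule card_mono[rotated]) simp
  also have "\<dots> \<le> 2^(n-1)" using card_poly_roots_bound[OF p(1)] p(2) by linarith
  finally have "card (subF n :: 'a set) \<le> 2^(n-1)" .
  moreover have "(2::nat)^(n-1) < 2^n" using npos by simp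
  ultimately show False using card_subF by linarith
qed

definition isbit :: "'a \<Rightarrow> bool" where "isbit z \<longleftrightarrow> z = 0 \<or> z = 1"

lemma chi_add: "isbit z \<Longrightarrow> isbit w \<Longrightarrow> chi (z + w) = chi z * chi w"
  by (auto simp: isbit_def chi_def)

lemma bit_add: "isbit z \<Longrightarrow> isbit w \<Longrightarrow> isbit (z + w)"
  by (auto simp: isbit_def)

lemma chi_sq: "chi z * chi z = 1" by (simp add: chi_def)

lemma bit_T2: "isbit (T2 x)" using T2_01 by (simp add: isbit_def)
lemma bit_T1: "x \<in> subF n \<Longrightarrow> isbit (T1 x)" using T1_01 by (simp add: isbit_def)

lemma orth:
  assumes e: "e \<in> subF n"
  shows "(\<Sum>t\<in>subF n. chi (T1 (t * e))) = (if e = 0 then 2^n else 0)"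
proof (cases "e = 0")
  case True
  thus ?thesis by (simp add: chi_def card_subF)
next
  case False
  obtain t0 where t0: "t0 \<in> subF n" "T1 t0 = 1" using T1_nonzero by blast
  define t1 where "t1 = t0 / e"
  have t1: "t1 \<in> subF n" using t0 e by (simp add: t1_def subF_div)
  let ?S = "(\<Sum>t\<in>subF n. chi (T1 (t * e)))"
  have "?S = (\<Sum>t\<in>subF n. chi (T1 ((t + t1) * e)))"
    by (rule sum.reindex_bij_witness[of _ "\<lambda>t. t + t1" "\<lambda>t. t + t1"])
       (auto simp: t1 subF_add add.assoc)
  also have "\<dots> = (\<Sum>t\<in>subF n. - chi (T1 (t * e)))"
  proof (rule sum.cong[OF refl])
    fix t :: 'a assume "t \<in> subF n"
    hence b: "isbit (T1 (t * e))" using e by (simp add: bit_T1 subF_mult)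
    have "T1 ((t + t1) * e) = T1 (t * e) + 1"
      using False t0 by (simp add: distrib_right T1_add t1_def)
    thus "chi (T1 ((t + t1) * e)) = - chi (T1 (t * e))"
      using b by (auto simp: isbit_def chi_def)
  qed
  also have "\<dots> = - ?S" by (simp add: sum_negf)
  finally have "?S = 0" by simp
  thus ?thesis using False by simp
qed


lemma fermat1: "(x::'a) \<noteq> 0 \<Longrightarrow> x ^ (2^(2*n) - 1) = 1"
proof -
  assume x: "x \<noteq> 0"
  have "x * x ^ (2^(2*n) - 1) = x ^ Suc (2^(2*n) - 1)" by (simp only: power_Suc)
  also have "Suc (2^(2*n) - 1) = 2^(2*n)" by simp
  finally have "x * x ^ (2^(2*n) - 1) = x * 1" using fermat by simp
  thus ?thesis using x by (metis mult_left_cancel)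
qed

definition qm1 :: nat where "qm1 = 2^n - 1"

lemma Suc_qm1: "Suc qm1 = 2^n" by (simp add: qm1_def)
lemma qm1_pos: "qm1 > 0" using q_ge2 by (simp add: qm1_def)

lemma qq: "qm1 * (2^n + 1) = (2::nat)^(2*n) - 1"
proof -
  have "(2::nat)^(2*n) = 2^n * 2^n" by (simp add: power_add[symmetric] mult_2)
  moreover have "(1::nat) \<le> 2^n" by simp
  ultimately show ?thesis by (simp add: qm1_def algebra_simps diff_mult_distrib2)
qed

lemma pow_qm1_U: "(x::'a) \<noteq> 0 \<Longrightarrow> x ^ qm1 \<in> unit_circle n"
proof -
  assume x: "x \<noteq> 0"
  have "(x ^ qm1) ^ (2^n + 1) = x ^ (qm1 * (2^n + 1))" by (simp only: power_mult)
  also have "\<dots> = 1" by (simp only: qq fermat1[OF x])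
  finally show ?thesis by (simp add: unit_circle_def)
qed

lemma subF_pow: "(t::'a) \<in> subF n \<Longrightarrow> t \<noteq> 0 \<Longrightarrow> t ^ qm1 = 1"
proof -
  assume t: "t \<in> subF n" "t \<noteq> 0"
  have "t * t ^ qm1 = t ^ Suc qm1" by (simp only: power_Suc)
  also have "\<dots> = t * 1" using t by (simp add: subF_iff Suc_qm1)
  finally show ?thesis using t by (metis mult_left_cancel)
qed

lemma fib_struct:
  assumes v: "(v::'a) \<noteq> 0"
  shows "{x. x \<noteq> 0 \<and> x ^ qm1 = v ^ qm1} = (\<lambda>t. t * v) ` (subF n - {0})"
proof
  show "(\<lambda>t. t * v) ` (subF n - {0}) \<subseteq> {x. x \<noteq> 0 \<and> x ^ qm1 = v ^ qm1}"
    using v by (auto simp: power_mult_distrib subF_pow)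
next
  show "{x. x \<noteq> 0 \<and> x ^ qm1 = v ^ qm1} \<subseteq> (\<lambda>t. t * v) ` (subF n - {0})"
  proof
    fix x assume x: "x \<in> {x. x \<noteq> 0 \<and> x ^ qm1 = v ^ qm1}"
    define t where "t = x / v"
    have tq: "t ^ qm1 = 1" using x v by (simp add: t_def power_divide)
    have "t ^ (2^n) = t ^ Suc qm1" by (simp add: Suc_qm1)
    also have "\<dots> = t" using tq by simp
    finally have "t \<in> subF n" by (simp add: subF_iff)
    moreover have "t \<noteq> 0" using x v by (simp add: t_def)
    moreover have "x = t * v" using v by (simp add: t_def)
    ultimately show "x \<in> (\<lambda>t. t * v) ` (subF n - {0})" by blast
  qed
qed

lemma card_fib:
  assumes v: "(v::'a) \<noteq> 0"
  shows "card {x. x \<noteq> 0 \<and> x ^ qm1 = v ^ qm1} = qm1"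
proof -
  have "inj_on (\<lambda>t. t * v) (subF n - {0})" using v by (auto simp: inj_on_def)
  hence "card ((\<lambda>t. t * v) ` (subF n - {0})) = card (subF n - {0::'a})" by (rule card_image)
  also have "\<dots> = qm1" using card_subF subF_0 by (simp add: card_Diff_singleton qm1_def)
  finally show ?thesis using fib_struct[OF v] by simp
qed

lemma U_le: "card (unit_circle n :: 'a set) \<le> 2^n + 1"
proof -
  have "unit_circle n = {x::'a. x^(2^n+1) + 0 * x = 1}" by (simp add: unit_circle_def)
  moreover have "(2::nat) \<le> 2^n + 1" using q_ge2 by simp
  ultimately show ?thesis using root_bound[of "2^n+1" 0 1] by simp
qed

lemma Ucount:
  "(\<forall>y\<in>unit_circle n. card {x\<in>UNIV - {0::'a}. x ^ qm1 = y} = qm1) \<and> card (unit_circle n :: 'a set) = 2^n + 1"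
proof (rule double_count[where f="\<lambda>x. x ^ qm1"])
  show "(\<lambda>x::'a. x ^ qm1) ` (UNIV - {0}) \<subseteq> unit_circle n" using pow_qm1_U by blast
  show "card {x \<in> UNIV - {0::'a}. x ^ qm1 = y} \<le> qm1" if "y \<in> unit_circle n" for y
  proof (cases "\<exists>v::'a. v \<noteq> 0 \<and> v ^ qm1 = y")
    case True
    then obtain v where v: "v \<noteq> 0" "v ^ qm1 = y" by blast
    have "{x \<in> UNIV - {0::'a}. x ^ qm1 = y} = {x. x \<noteq> 0 \<and> x ^ qm1 = v ^ qm1}"
      using v by auto
    thus ?thesis using card_fib[OF v(1)] by simp
  next
    case False
    hence "{x \<in> UNIV - {0::'a}. x ^ qm1 = y} = {}" by auto
    thus ?thesis by (simp only: card.empty)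
  qed
  show "(2^n + 1) * qm1 \<le> card (UNIV - {0::'a})"
    using qq cardF by (simp add: card_Diff_singleton mult.commute)
  show "0 < qm1" by (rule qm1_pos)
qed (use U_le in simp_all)

lemma card_U: "card (unit_circle n :: 'a set) = 2^n + 1" using Ucount by blast

lemma U_surj: "(u::'a) \<in> unit_circle n \<Longrightarrow> \<exists>v. v \<noteq> 0 \<and> v ^ qm1 = u"
proof -
  assume u: "u \<in> unit_circle n"
  hence "card {x\<in>UNIV - {0::'a}. x ^ qm1 = u} = qm1" using Ucount by blast
  hence "0 < card {x\<in>UNIV - {0::'a}. x ^ qm1 = u}" using qm1_pos by (simp only:)
  hence "{x\<in>UNIV - {0::'a}. x ^ qm1 = u} \<noteq> {}" by (metis card_gt_0_iff)
  thus ?thesis by blast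
qed

lemma n1_U: "n = 1 \<Longrightarrow> (b::'a) \<noteq> 0 \<Longrightarrow> b \<in> unit_circle n"
  using fermat1[of b] by (simp add: unit_circle_def)


lemma U_inv: "(u::'a) \<in> unit_circle n \<Longrightarrow> inverse u \<in> unit_circle n"
  by (simp add: U_iff cj_inv) (metis inverse_mult_distrib inverse_1)

lemma cj_fix_iff: "cj (z::'a) = z \<longleftrightarrow> z = 0 \<or> z ^ qm1 = 1"
proof -
  have "cj z = z * z ^ qm1" by (simp only: Suc_qm1[symmetric] power_Suc)
  thus ?thesis by (metis mult_cancel_left1 mult.commute mult_1)
qed

lemma A_val:
  assumes u: "(u::'a) \<in> unit_circle n"
  shows "(\<Sum>x\<in>{x\<in>UNIV-{0}. x^qm1 = u}. chi (T2 (w*x))) = (if w = 0 \<or> u = inverse (w^qm1) then 2^n else 0) - 1"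
proof -
  obtain v where v: "v \<noteq> 0" "v ^ qm1 = u" using U_surj[OF u] by blast
  have seteq: "{x\<in>UNIV-{0}. x^qm1 = u} = (\<lambda>t. t * v) ` (subF n - {0})"
    using fib_struct[OF v(1)] v(2) by auto
  have inj: "inj_on (\<lambda>t. t * v) (subF n - {0})" using v by (auto simp: inj_on_def)
  define e where "e = w * v + cj (w * v)"
  have e: "e \<in> subF n" unfolding e_def by (rule trace_in_subF)
  have "(\<Sum>x\<in>{x\<in>UNIV-{0}. x^qm1 = u}. chi (T2 (w*x))) = (\<Sum>t\<in>subF n - {0}. chi (T2 (w*(t*v))))"
    unfolding seteq sum.reindex[OF inj] by (simp add: comp_def)
  also have "\<dots> = (\<Sum>t\<in>subF n - {0}. chi (T1 (t * e)))"
  proof (rule sum.cong[OF refl])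
    fix t :: 'a assume "t \<in> subF n - {0}"
    hence "T2 (t * (w * v)) = T1 (t * e)" by (simp add: T2_F e_def)
    thus "chi (T2 (w*(t*v))) = chi (T1 (t * e))" by (simp add: ac_simps)
  qed
  also have "\<dots> = (\<Sum>t\<in>subF n. chi (T1 (t * e))) - chi (T1 (0 * e))"
    using subF_0 by (simp add: sum_diff1)
  also have "\<dots> = (if e = 0 then 2^n else 0) - 1" using orth[OF e] by (simp add: chi_def)
  also have "(e = 0) = (w = 0 \<or> u = inverse (w^qm1))"
  proof -
    have "(e = 0) = (cj (w*v) = w * v)" unfolding e_def using add_eq0_iff by metis
    also have "\<dots> = (w * v = 0 \<or> (w*v)^qm1 = 1)" by (rule cj_fix_iff)
    also have "\<dots> = (w = 0 \<or> w^qm1 * u = 1)" using v by (simp add: power_mult_distrib)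
    also have "\<dots> = (w = 0 \<or> u = inverse (w^qm1))"
      by (metis inverse_unique mult.commute inverse_zero power_eq_0_iff zero_neq_one mult_zero_left right_inverse)
    finally show ?thesis .
  qed
  finally show ?thesis .
qed

lemma zero_pow_qm1: "(0::'a) ^ qm1 = 0" using qm1_pos by simp

lemma walsh_gen:
  assumes G: "\<And>u. isbit (G u)"
  defines "TT \<equiv> (\<Sum>u\<in>unit_circle n. chi (G u))"
  shows "(\<Sum>x\<in>UNIV. chi (G (x^qm1) + T2 (w*x))) =
     chi (G 0) + (if w = 0 then int qm1 * TT else 2^n * chi (G (inverse (w^qm1))) - TT)"
proof -
  let ?U = "unit_circle n :: 'a set"
  have "(\<Sum>x\<in>UNIV. chi (G (x^qm1) + T2 (w*x))) =
        chi (G (0^qm1) + T2 (w*0)) + (\<Sum>x\<in>UNIV-{0}. chi (G (x^qm1) + T2 (w*x)))"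
    by (simp add: sum.remove[of UNIV 0])
  also have "chi (G (0^qm1) + T2 (w*0)) = chi (G 0)" by (simp add: zero_pow_qm1)
  also have "(\<Sum>x\<in>UNIV-{0}. chi (G (x^qm1) + T2 (w*x))) =
      (\<Sum>x\<in>UNIV-{0}. chi (G (x^qm1)) * chi (T2 (w*x)))"
    by (rule sum.cong[OF refl]) (simp add: chi_add G bit_T2)
  also have "\<dots> = (\<Sum>u\<in>?U. \<Sum>x\<in>{x\<in>UNIV-{0}. x^qm1 = u}. chi (G (x^qm1)) * chi (T2 (w*x)))"
    by (rule sum.group[symmetric]) (use pow_qm1_U in auto)
  also have "\<dots> = (\<Sum>u\<in>?U. chi (G u) * ((if w = 0 \<or> u = inverse (w^qm1) then 2^n else 0) - 1))"
  proof (rule sum.cong[OF refl])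
    fix u assume u: "u \<in> ?U"
    have "(\<Sum>x\<in>{x\<in>UNIV-{0}. x^qm1 = u}. chi (G (x^qm1)) * chi (T2 (w*x))) =
          (\<Sum>x\<in>{x\<in>UNIV-{0}. x^qm1 = u}. chi (G u) * chi (T2 (w*x)))"
      by (rule sum.cong) auto
    also have "\<dots> = chi (G u) * (\<Sum>x\<in>{x\<in>UNIV-{0}. x^qm1 = u}. chi (T2 (w*x)))"
      by (simp add: sum_distrib_left)
    finally show "(\<Sum>x\<in>{x\<in>UNIV-{0}. x^qm1 = u}. chi (G (x^qm1)) * chi (T2 (w*x))) =
          chi (G u) * ((if w = 0 \<or> u = inverse (w^qm1) then 2^n else 0) - 1)"
      using A_val[OF u] by simp
  qed
  also have "\<dots> = (if w = 0 then int qm1 * TT else 2^n * chi (G (inverse (w^qm1))) - TT)"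
  proof (cases "w = 0")
    case True
    have "int qm1 = 2^n - 1" by (simp add: qm1_def of_nat_diff)
    thus ?thesis using True by (simp add: TT_def sum_distrib_left mult.commute)
  next
    case False
    have uw: "inverse (w^qm1) \<in> ?U" using False by (simp add: U_inv pow_qm1_U)
    have "(\<Sum>u\<in>?U. chi (G u) * ((if w = 0 \<or> u = inverse (w^qm1) then 2^n else 0) - 1)) =
          (\<Sum>u\<in>?U. (if u = inverse (w^qm1) then 2^n * chi (G u) else 0) - chi (G u))"
      by (rule sum.cong[OF refl]) (use False in \<open>simp add: algebra_simps\<close>)
    also have "\<dots> = (\<Sum>u\<in>?U. (if u = inverse (w^qm1) then 2^n * chi (G u) else 0)) - (\<Sum>u\<in>?U. chi (G u))"
      by (rule sum_subtractf)
    also have "(\<Sum>u\<in>?U. (if u = inverse (w^qm1) then 2^n * chi (G u) else 0)) = 2^n * chi (G (inverse (w^qm1)))"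
      using uw by (simp add: sum.delta)
    finally show ?thesis using False by (simp add: TT_def)
  qed
  finally show ?thesis .
qed

lemma chi_pm: "chi z = 1 \<or> chi z = -1" by (simp add: chi_def)

lemma bent_crit:
  assumes G: "\<And>u. isbit (G u)"
  defines "TT \<equiv> (\<Sum>u\<in>unit_circle n. chi (G u))"
  assumes small: "\<bar>TT - chi (G 0)\<bar> < 2 * 2^n"
  shows "(\<forall>w. (\<Sum>x\<in>UNIV. chi (G (x^qm1) + T2 (w*x)))^2 = 2^(2*n)) \<longleftrightarrow> TT = chi (G 0)"
proof
  assume all: "\<forall>w. (\<Sum>x\<in>UNIV. chi (G (x^qm1) + T2 (w*x)))^2 = 2^(2*n)"
  have "(chi (G 0) + (2^n * chi (G (inverse (1^qm1))) - TT))^2 = 2^(2*n)"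
    using all[rule_format, of 1] walsh_gen[where G=G and w=1, OF G] by (simp add: TT_def)
  hence eq: "(chi (G 0) - TT + 2^n * chi (G 1))^2 = (2^n)^2"
    by (simp add: power_mult[symmetric] mult.commute algebra_simps)
  define d where "d = chi (G 0) - TT"
  define q :: int where "q = 2^n"
  have qpos: "q > 0" by (simp add: q_def)
  have "\<bar>d\<bar> < 2 * q" using small by (simp add: d_def q_def abs_minus_commute)
  moreover have "(d + q * chi (G 1))^2 = q^2" using eq by (simp add: d_def q_def)
  ultimately show "TT = chi (G 0)"
  proof -
    assume ab: "\<bar>d\<bar> < 2 * q" and e: "(d + q * chi (G 1))^2 = q^2"
    have "d = 0"
    proof (cases "chi (G 1) = 1")
      case True
      hence "d * (d + 2 * q) = 0" using e by (simp add: power2_eq_square algebra_simps)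
      thus ?thesis using ab qpos by auto
    next
      case False
      hence "chi (G 1) = -1" using chi_pm by blast
      hence "d * (d - 2 * q) = 0" using e by (simp add: power2_eq_square algebra_simps)
      thus ?thesis using ab qpos by auto
    qed
    thus ?thesis by (simp add: d_def)
  qed
next
  assume T: "TT = chi (G 0)"
  show "\<forall>w. (\<Sum>x\<in>UNIV. chi (G (x^qm1) + T2 (w*x)))^2 = 2^(2*n)"
  proof
    fix w
    have c2: "chi z * chi z = 1" for z :: 'a by (rule chi_sq)
    have q2: "(2::int)^(2*n) = 2^n * 2^n" by (simp add: power_add[symmetric] mult_2)
    have h: "1 + int qm1 = 2^n" by (simp add: qm1_def of_nat_diff)
    have "chi (G 0) + int qm1 * TT = (1 + int qm1) * chi (G 0)" using T by (simp add: algebra_simps)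
    hence "chi (G 0) + int qm1 * TT = 2^n * chi (G 0)" by (simp only: h)
    hence "\<exists>z::'a. (\<Sum>x\<in>UNIV. chi (G (x^qm1) + T2 (w*x))) = 2^n * chi z"
      using walsh_gen[where G=G and w=w, OF G] T unfolding TT_def[symmetric]
      by (cases "w = 0") (auto intro: exI)
    then obtain z :: 'a where "(\<Sum>x\<in>UNIV. chi (G (x^qm1) + T2 (w*x))) = 2^n * chi z" by blast
    moreover have "(2^n * chi z)^2 = (2::int)^n * 2^n * (chi z * chi z)"
      by (simp add: power2_eq_square algebra_simps)
    ultimately show "(\<Sum>x\<in>UNIV. chi (G (x^qm1) + T2 (w*x)))^2 = 2^(2*n)"
      using q2 c2 by simp
  qed
qed


lemma sum_ne0: "(u::'a) \<noteq> b \<Longrightarrow> u + b \<noteq> 0" using add_eq0_iff by blast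

lemma phi_H1:
  assumes b: "(b::'a) \<in> unit_circle n" and u: "u \<in> unit_circle n" and ub: "u \<noteq> b"
  shows "b / (u + b) + cj (b / (u + b)) = 1"
proof -
  have b0: "b \<noteq> 0" and u0: "u \<noteq> 0" using b u by (auto simp: U_nz)
  have s0: "u + b \<noteq> 0" using ub by (rule sum_ne0)
  have "cj (b / (u + b)) = inverse b / (inverse u + inverse b)"
    by (simp add: cj_div cj_add U_cj b u)
  also have "\<dots> = u / (u + b)" using b0 u0 s0 by (simp add: field_simps add.commute)
  finally have "b / (u + b) + cj (b / (u + b)) = (b + u) / (u + b)" by (simp add: add_divide_distrib)
  thus ?thesis using s0 by (simp add: add.commute)
qed

lemma H1_inv:
  assumes b: "(b::'a) \<in> unit_circle n" and y: "y + cj y = 1"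
  shows "y \<noteq> 0" "b / y + b \<in> unit_circle n" "b / y + b \<noteq> b"
proof -
  show y0: "y \<noteq> 0" using y by (auto simp: power_0_left)
  have b0: "b \<noteq> 0" using b by (simp add: U_nz)
  have cy: "cj y = 1 + y" using y by (metis add.assoc add_self add_0_left add.commute)
  have cy0: "1 + y \<noteq> 0" using cy y0 by (metis cj_eq0)
  have "cj (b / y + b) = inverse b / (1 + y) + inverse b" by (simp add: cj_add cj_div U_cj b cy)
  hence "(b / y + b) * cj (b / y + b) = (b / y + b) * (inverse b / (1 + y) + inverse b)" by simp
  also have "\<dots> = 1"
  proof -
    have yy: "1 + (1 + y) = y" by (simp add: add.assoc[symmetric])
    have e1: "inverse b / (1 + y) + inverse b = inverse b * (y / (1 + y))"
    proof -
      have "y / (1 + y) = ((1 + y) + 1) / (1 + y)" using yy by (simp only: add.commute)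
      also have "\<dots> = (1 + y) / (1 + y) + 1 / (1 + y)" by (rule add_divide_distrib)
      also have "\<dots> = 1 + 1 / (1 + y)" using cy0 by simp
      finally have "y / (1 + y) = 1 + 1 / (1 + y)" .
      thus ?thesis by (simp add: distrib_left divide_inverse mult.commute)
    qed
    have e2: "b / y + b = b * ((1 + y) / y)" using y0 by (simp add: field_simps)
    have "b * ((1 + y) / y) * (inverse b * (y / (1 + y))) = (b * inverse b) * (((1 + y) / y) * (y / (1 + y)))"
      by (simp only: ac_simps)
    also have "\<dots> = 1" using b0 y0 cy0 by simp
    finally show ?thesis unfolding e1 e2 .
  qed
  finally show "b / y + b \<in> unit_circle n" by (simp add: U_iff)
  show "b / y + b \<noteq> b" using b0 y0 by simp
qed

lemma sum_H1_zero:
  assumes d: "d + cj d \<noteq> (0::'a)"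
  shows "(\<Sum>y\<in>{y::'a. y + cj y = 1}. chi (T2 (d * y))) = 0"
proof -
  let ?H = "{y::'a. y + cj y = 1}"
  define e where "e = d + cj d"
  have e: "e \<in> subF n" "e \<noteq> 0" using d by (simp_all add: e_def trace_in_subF)
  obtain t0 where t0: "t0 \<in> subF n" "T1 t0 = 1" using T1_nonzero by blast
  define t where "t = t0 / e"
  have t: "t \<in> subF n" using t0 e by (simp add: t_def subF_div)
  have tc: "cj t = t" using t by (simp add: subF_iff)
  have T2t: "T2 (d * t) = 1"
  proof -
    have "T2 (d * t) = T2 (t * d)" by (simp add: mult.commute)
    also have "\<dots> = T1 (t * e)" using t by (simp add: T2_F e_def)
    also have "t * e = t0" using e by (simp add: t_def)
    finally show ?thesis using t0 by simp
  qed
  let ?S = "(\<Sum>y\<in>?H. chi (T2 (d * y)))"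
  have "?S = (\<Sum>y\<in>?H. chi (T2 (d * (y + t))))"
  proof -
    have mem: "y + t \<in> ?H" if "y \<in> ?H" for y
    proof -
      have "y + cj y = 1" using that by simp
      hence "(y + t) + cj (y + t) = 1" using tc by (simp add: cj_add algebra_simps)
      thus ?thesis by simp
    qed
    have tt: "y + t + t = y" for y by (simp add: add.assoc)
    show ?thesis
      by (rule sum.reindex_bij_witness[of _ "\<lambda>y. y + t" "\<lambda>y. y + t"]) (simp_all only: mem tt)
  qed
  also have "\<dots> = (\<Sum>y\<in>?H. - chi (T2 (d * y)))"
  proof (rule sum.cong[OF refl])
    fix y
    have "T2 (d * (y + t)) = T2 (d * y) + 1" by (simp add: distrib_left T2_add T2t)
    thus "chi (T2 (d * (y + t))) = - chi (T2 (d * y))"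
      using T2_01[of "d * y"] by (auto simp: chi_def)
  qed
  also have "\<dots> = - ?S" by (simp add: sum_negf)
  finally show ?thesis by simp
qed

lemma TT_U:
  assumes a1: "a1 \<in> subF n" "a1 \<noteq> 0" and b: "(b::'a) \<in> unit_circle n" and b1: "b \<noteq> 1"
  shows "(\<Sum>u\<in>unit_circle n. chi (T2 (a1 / (u + b)))) = 1"
proof -
  let ?U = "unit_circle n :: 'a set"
  let ?H = "{y::'a. y + cj y = 1}"
  have b0: "b \<noteq> 0" using b by (simp add: U_nz)
  define d where "d = a1 / b"
  have "d + cj d = a1 * (inverse b + b)"
    using a1 b by (simp add: d_def cj_div U_cj subF_iff field_simps)
  moreover have "inverse b + b \<noteq> 0"
  proof
    assume "inverse b + b = 0"
    hence "inverse b = b" using add_eq0_iff by blast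
    hence "b * b = 1" using b0 by (metis right_inverse)
    hence "(b + 1) * (b + 1) = 0" by (simp add: algebra_simps)
    thus False using b1 sum_ne0 by auto
  qed
  ultimately have dne: "d + cj d \<noteq> 0" using assms by (auto simp: subF_iff)
  have "(\<Sum>u\<in>?U. chi (T2 (a1 / (u + b)))) = chi (T2 (a1 / (b + b))) + (\<Sum>u\<in>?U - {b}. chi (T2 (a1 / (u + b))))"
    using b by (simp add: sum.remove)
  also have "chi (T2 (a1 / (b + b))) = 1" by (simp add: chi_def)
  also have "(\<Sum>u\<in>?U - {b}. chi (T2 (a1 / (u + b)))) = (\<Sum>y\<in>?H. chi (T2 (d * y)))"
  proof (rule sum.reindex_bij_witness[of _ "\<lambda>y. b / y + b" "\<lambda>u. b / (u + b)"])
    fix u assume u: "u \<in> ?U - {b}"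
    have s0: "u + b \<noteq> 0" using u sum_ne0 by auto
    show "b / (b / (u + b)) + b = u" using s0 b0 by (simp add: add.assoc)
    show "b / (u + b) \<in> ?H" using phi_H1[OF b] u by auto
    show "chi (T2 (d * (b / (u + b)))) = chi (T2 (a1 / (u + b)))" using b0 by (simp add: d_def)
  next
    fix y assume y: "y \<in> ?H"
    hence y': "y + cj y = 1" by simp
    show "b / (b / y + b + b) = y" using H1_inv(1)[OF b y'] b0 by (simp add: add.assoc)
    show "b / y + b \<in> ?U - {b}" using H1_inv[OF b y'] by simp
  qed
  also have "\<dots> = 0" by (rule sum_H1_zero[OF dne])
  finally show ?thesis by simp
qed

lemma TT_1:
  assumes a1: "a1 \<in> subF n"
  shows "(\<Sum>u\<in>unit_circle n. chi (T2 (a1 / (u + (1::'a))))) = 1 + 2^n * chi (T1 a1)"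
proof -
  let ?U = "unit_circle n :: 'a set"
  have one: "(1::'a) \<in> ?U" by (simp add: U_iff)
  have "(\<Sum>u\<in>?U. chi (T2 (a1 / (u + 1)))) = chi (T2 (a1 / (1 + 1))) + (\<Sum>u\<in>?U - {1}. chi (T2 (a1 / (u + 1))))"
    using one by (simp add: sum.remove)
  also have "chi (T2 (a1 / (1 + 1))) = 1" by (simp add: chi_def)
  also have "(\<Sum>u\<in>?U - {1}. chi (T2 (a1 / (u + 1)))) = (\<Sum>u\<in>?U - {1}. chi (T1 a1))"
  proof (rule sum.cong[OF refl])
    fix u assume u: "u \<in> ?U - {1}"
    have "T2 (a1 / (u + 1)) = T2 (a1 * (1 / (u + 1)))" by simp
    also have "\<dots> = T1 (a1 * (1 / (u + 1) + cj (1 / (u + 1))))" using a1 by (rule T2_F)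
    also have "1 / (u + 1) + cj (1 / (u + 1)) = 1" using phi_H1[OF one] u by auto
    finally show "chi (T2 (a1 / (u + 1))) = chi (T1 a1)" by simp
  qed
  also have "\<dots> = 2^n * chi (T1 a1)" using card_U one by (simp add: card_Diff_singleton)
  finally show ?thesis .
qed

lemma T2_subF: "a \<in> subF n \<Longrightarrow> T2 (a::'a) = 0"
proof -
  assume a: "a \<in> subF n"
  have "T2 a = T2 (a * 1)" by simp
  also have "\<dots> = T1 (a * (1 + cj 1))" using a by (rule T2_F)
  finally show ?thesis by simp
qed


lemma U_mult: "(u::'a) \<in> unit_circle n \<Longrightarrow> v \<in> unit_circle n \<Longrightarrow> u * v \<in> unit_circle n"
proof -
  assume "u \<in> unit_circle n" "v \<in> unit_circle n"
  hence "u * cj u = 1" "v * cj v = 1" by (simp_all add: U_iff)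
  moreover have "(u * v) * cj (u * v) = (u * cj u) * (v * cj v)" by (simp add: cj_mult ac_simps)
  ultimately show ?thesis by (simp add: U_iff)
qed

lemma U_pow: "(u::'a) \<in> unit_circle n \<Longrightarrow> u ^ k \<in> unit_circle n"
proof (induction k)
  case 0 thus ?case by (simp add: U_iff)
next
  case (Suc k)
  hence "u * u ^ k \<in> unit_circle n" by (intro U_mult)
  thus ?case by (simp only: power_Suc)
qed

lemma sq1: "(r::'a) * r = 1 \<Longrightarrow> r = 1"
proof -
  assume r: "r * r = 1"
  have "(r + 1) * (r + 1) = r * r + (r + r) + 1" by (simp add: algebra_simps char2)
  also have "\<dots> = 0" using r by simp
  finally have "r + 1 = 0" by simp
  thus ?thesis using add_eq0_iff by blast
qed

lemma U_subF: "(u::'a) \<in> unit_circle n \<Longrightarrow> u \<in> subF n \<Longrightarrow> u = 1"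
  by (rule sq1) (simp add: U_iff subF_iff)

lemma psi_eq:
  assumes r: "(r::'a) \<noteq> 0" and r0: "r0 \<noteq> 0" and e: "r + inverse r = r0 + inverse r0"
  shows "r = r0 \<or> r = inverse r0"
proof -
  have "(r + inverse r) * (r * r0) = (r0 + inverse r0) * (r * r0)" using e by simp
  moreover have "(r + inverse r) * (r * r0) = r * r * r0 + r0" using r by (simp add: field_simps)
  moreover have "(r0 + inverse r0) * (r * r0) = r * r0 * r0 + r" using r0 by (simp add: field_simps)
  ultimately have "r * r * r0 + r0 = r * r0 * r0 + r" by simp
  hence "(r * r * r0 + r0) + (r * r0 * r0 + r) = 0" using add_eq0_iff by blast
  moreover have "(r + r0) * (r * r0 + 1) = (r * r * r0 + r0) + (r * r0 * r0 + r)" by (simp add: algebra_simps)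
  ultimately have "(r + r0) * (r * r0 + 1) = 0" by simp
  hence "r + r0 = 0 \<or> r * r0 + 1 = 0" by simp
  thus ?thesis
  proof
    assume "r + r0 = 0" thus ?thesis using add_eq0_iff by blast
  next
    assume "r * r0 + 1 = 0"
    hence "r * r0 = 1" using add_eq0_iff by blast
    hence "r = inverse r0" using r0 by (metis inverse_unique mult.commute)
    thus ?thesis by blast
  qed
qed

lemma psi_ne0: "(r::'a) \<noteq> 0 \<Longrightarrow> r \<noteq> 1 \<Longrightarrow> r + inverse r \<noteq> 0"
proof
  assume r: "r \<noteq> 0" "r \<noteq> 1" and "r + inverse r = 0"
  hence "inverse r = r" using add_eq0_iff by metis
  hence "r * r = 1" using r by (metis right_inverse)
  thus False using sq1 r by blast
qed

lemma psi_subF: "(r::'a) \<in> unit_circle n \<or> r \<in> subF n \<Longrightarrow> r + inverse r \<in> subF n"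
proof -
  assume "r \<in> unit_circle n \<or> r \<in> subF n"
  thus ?thesis
  proof
    assume r: "r \<in> unit_circle n"
    have "cj (r + inverse r) = inverse r + r" using r by (simp add: cj_add cj_inv U_cj)
    thus ?thesis by (simp add: subF_iff add.commute)
  next
    assume r: "r \<in> subF n"
    thus ?thesis by (simp add: subF_add subF_inv)
  qed
qed

lemma T2_sq: "T2 ((z::'a) * z) = T2 z"
proof -
  have "T2 z = (T2 z)^2" unfolding T2_def by (rule trS_sq[symmetric]) (rule fermat)
  also have "\<dots> = (\<Sum>i<2*n. z^(2^i))^(2^1)" by (simp add: T2_def trS_def)
  also have "\<dots> = (\<Sum>i<2*n. (z^(2^i))^(2^1))" by (rule pow2k_sum)
  also have "\<dots> = (\<Sum>i<2*n. (z*z)^(2^i))"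
    by (rule sum.cong[OF refl]) (simp add: power_mult[symmetric] mult.commute power2_eq_square[symmetric])
  also have "\<dots> = T2 (z * z)" by (simp add: T2_def trS_def)
  finally show ?thesis by simp
qed


definition psi :: "'a \<Rightarrow> 'a" where "psi r = r + inverse r"

lemma card2: "card {a, b} \<le> 2" by (simp add: card_insert_if)

lemma fib_le2:
  assumes D0: "\<And>r. r \<in> D \<Longrightarrow> (r::'a) \<noteq> 0" and fD: "finite D"
  shows "card {r\<in>D. psi r = y} \<le> 2"
proof (cases "\<exists>r0\<in>D. psi r0 = y")
  case True
  then obtain r0 where r0: "r0 \<in> D" "psi r0 = y" by blast
  have "{r\<in>D. psi r = y} \<subseteq> {r0, inverse r0}"
  proof
    fix r assume "r \<in> {r\<in>D. psi r = y}"
    hence rD: "r \<in> D" and req: "r + inverse r = r0 + inverse r0" using r0 by (auto simp: psi_def)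
    have "r = r0 \<or> r = inverse r0" by (rule psi_eq[OF D0[OF rD] D0[OF r0(1)] req])
    thus "r \<in> {r0, inverse r0}" by blast
  qed
  hence "card {r\<in>D. psi r = y} \<le> card {r0, inverse r0}" by (rule card_mono[rotated]) simp
  thus ?thesis using card2[of r0 "inverse r0"] by linarith
next
  case False
  hence "{r\<in>D. psi r = y} = {}" by blast
  thus ?thesis by (simp only: card.empty)
qed

definition DD :: "'a set" where "DD = (unit_circle n - {1}) \<union> (subF n - {0, 1})"

lemma DD_disj: "(unit_circle n - {1}) \<inter> (subF n - {0, 1}) = ({}::'a set)"
proof (rule equals0I)
  fix x :: 'a assume "x \<in> (unit_circle n - {1}) \<inter> (subF n - {0, 1})"
  hence "x \<in> unit_circle n" "x \<in> subF n" "x \<noteq> 1" by auto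
  thus False using U_subF by blast
qed

lemma card_DD: "card (DD :: 'a set) = qm1 * 2"
proof -
  have one: "(1::'a) \<in> unit_circle n" by (simp add: U_iff)
  have c1: "card (unit_circle n - {1::'a}) = 2^n" using card_U one by (simp add: card_Diff_singleton)
  have "{0, 1} \<subseteq> (subF n :: 'a set)" using subF_0 subF_1 by blast
  hence c2: "card (subF n - {0, 1::'a}) = 2^n - 2" using card_subF by (simp add: card_Diff_subset)
  have "card (DD :: 'a set) = card (unit_circle n - {1::'a}) + card (subF n - {0, 1::'a})"
    unfolding DD_def by (rule card_Un_disjoint) (simp_all add: DD_disj)
  also have "\<dots> = 2^n + (2^n - 2)" using c1 c2 by simp
  also have "\<dots> = qm1 * 2" using q_ge2 by (simp add: qm1_def)
  finally show ?thesis .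
qed

lemma DD_nz: "(r::'a) \<in> DD \<Longrightarrow> r \<noteq> 0"
proof
  assume "r \<in> DD" "r = 0"
  hence "(0::'a) \<in> unit_circle n" unfolding DD_def by blast
  thus False using U_nz by blast
qed

lemma psi_DD: "(r::'a) \<in> DD \<Longrightarrow> psi r \<in> subF n - {0}"
proof -
  assume r: "r \<in> DD"
  have "r \<in> unit_circle n \<or> r \<in> subF n" "r \<noteq> 0" "r \<noteq> 1" using r DD_nz[OF r] unfolding DD_def by blast+
  thus "psi r \<in> subF n - {0}" using psi_subF psi_ne0 by (simp add: psi_def)
qed

lemma DD_count: "(\<forall>y\<in>subF n - {0}. card {r\<in>DD. psi r = y} = 2) \<and> card (subF n - {0::'a}) = qm1"
proof (rule double_count[where f=psi])
  show "psi ` DD \<subseteq> subF n - {0::'a}"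
  proof (rule image_subsetI)
    fix r :: 'a assume "r \<in> DD" thus "psi r \<in> subF n - {0}" by (rule psi_DD)
  qed
  show "card {r \<in> DD. psi r = y} \<le> 2" for y :: 'a by (rule fib_le2[OF DD_nz]) simp_all
  show "qm1 * 2 \<le> card (DD::'a set)" by (simp add: card_DD)
  show "card (subF n - {0::'a}) \<le> qm1" using card_subF subF_0 by (simp add: card_Diff_singleton qm1_def)
qed simp_all

lemma sum_DD:
  fixes h :: "'a \<Rightarrow> int"
  shows "(\<Sum>r\<in>DD. h (psi r)) = 2 * (\<Sum>y\<in>subF n - {0::'a}. h y)"
proof -
  have "(\<Sum>r\<in>DD. h (psi r)) = (\<Sum>y\<in>subF n - {0::'a}. \<Sum>r\<in>{r\<in>DD. psi r = y}. h (psi r))"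
    by (rule sum.group[symmetric]) (simp, simp, rule image_subsetI, erule psi_DD)
  also have "\<dots> = (\<Sum>y\<in>subF n - {0::'a}. \<Sum>r\<in>{r\<in>DD. psi r = y}. h y)"
  proof (rule sum.cong[OF refl])
    fix y :: 'a
    show "(\<Sum>r\<in>{r\<in>DD. psi r = y}. h (psi r)) = (\<Sum>r\<in>{r\<in>DD. psi r = y}. h y)"
      by (rule sum.cong) simp_all
  qed
  also have "\<dots> = (\<Sum>y\<in>subF n - {0::'a}. 2 * h y)"
  proof (rule sum.cong[OF refl])
    fix y :: 'a assume "y \<in> subF n - {0}"
    hence "card {r\<in>DD. psi r = y} = 2" using DD_count by blast
    thus "(\<Sum>r\<in>{r\<in>DD. psi r = y}. h y) = 2 * h y" by simp
  qed
  finally show ?thesis by (simp add: sum_distrib_left)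
qed


definition sqr :: "'a \<Rightarrow> 'a" where "sqr r = r ^ (2^(2*n-1))"

lemma two_pow_pred: "2 * 2^(2*n-1) = (2::nat)^(2*n)"
  using npos by (metis Suc_diff_1 mult_pos_pos pos2 power_Suc zero_less_numeral)

lemma sqr_sq: "sqr r * sqr r = (r::'a)"
proof -
  have "sqr r * sqr r = r ^ (2 * 2^(2*n-1))" by (simp add: sqr_def power_add[symmetric] mult_2)
  thus ?thesis by (simp only: two_pow_pred fermat)
qed

lemma sq_sqr: "sqr (r * r) = (r::'a)"
proof -
  have "sqr (r * r) = r ^ (2 * 2^(2*n-1))" by (simp add: sqr_def power_mult_distrib power_add[symmetric] mult_2)
  thus ?thesis by (simp only: two_pow_pred fermat)
qed

lemma sqr_U: "(r::'a) \<in> unit_circle n \<Longrightarrow> sqr r \<in> unit_circle n"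
  unfolding sqr_def by (rule U_pow)

lemma sum_U_sq:
  fixes h :: "'a \<Rightarrow> int"
  shows "(\<Sum>w\<in>unit_circle n. h w) = (\<Sum>w\<in>unit_circle n. h (w * w))"
  by (rule sum.reindex_bij_witness[of _ "\<lambda>w. w * w" sqr])
     (simp_all add: sqr_sq sq_sqr U_mult sqr_U)

lemma kl_id:
  assumes A: "A \<in> subF n" "(A::'a) \<noteq> 0"
  shows "(\<Sum>w\<in>unit_circle n. chi (T2 (A * w))) = 1 - kloosterman n A"
proof -
  let ?U = "unit_circle n :: 'a set"
  define s where "s = A ^ (2^(n-1))"
  have nn: "2 * 2^(n-1) = (2::nat)^n" using npos by (metis Suc_diff_1 power_Suc)
  have ss: "s * s = A"
  proof -
    have "s * s = A ^ (2 * 2^(n-1))" by (simp add: s_def power_add[symmetric] mult_2)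
    also have "\<dots> = A" using A by (simp only: nn subF_iff)
    finally show ?thesis .
  qed
  have s: "s \<in> subF n" using A by (simp add: s_def subF_iff power_mult[symmetric] mult.commute) (simp add: power_mult)
  have s0: "s \<noteq> 0" using A ss by auto
  define G where "G y = chi (T1 (s * y))" for y
  have G0: "G 0 = 1" by (simp add: G_def chi_def)
  have psi1: "psi (1::'a) = 0" by (simp add: psi_def)
  have "(\<Sum>w\<in>?U. chi (T2 (A * w))) = (\<Sum>w\<in>?U. chi (T2 (A * (w * w))))" by (rule sum_U_sq)
  also have "\<dots> = (\<Sum>w\<in>?U. G (psi w))"
  proof (rule sum.cong[OF refl])
    fix w :: 'a assume w: "w \<in> ?U"
    have "T2 (A * (w * w)) = T2 ((s * w) * (s * w))" by (simp add: ss[symmetric] ac_simps)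
    also have "\<dots> = T2 (s * w)" by (rule T2_sq)
    also have "\<dots> = T1 (s * (w + cj w))" using s by (rule T2_F)
    finally show "chi (T2 (A * (w * w))) = G (psi w)" using w by (simp add: G_def psi_def U_cj)
  qed
  finally have LU: "(\<Sum>w\<in>?U. chi (T2 (A * w))) = (\<Sum>w\<in>?U. G (psi w))" .
  have "kloosterman n A = (\<Sum>x\<in>subF n. chi (T1 (inverse x + A * x)))"
    unfolding kloosterman_def tr_T1 by (rule refl)
  also have "\<dots> = chi (T1 (inverse 0 + A * 0)) + (\<Sum>x\<in>subF n - {0}. chi (T1 (inverse x + A * x)))"
    using subF_0 by (simp add: sum.remove)
  also have "chi (T1 (inverse 0 + A * 0)) = 1" by (simp add: chi_def)
  also have "(\<Sum>x\<in>subF n - {0}. chi (T1 (inverse x + A * x))) = (\<Sum>v\<in>subF n - {0}. G (psi v))"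
  proof (rule sum.reindex_bij_witness[of _ "\<lambda>v. v / s" "\<lambda>x. x * s"])
    fix x :: 'a assume x: "x \<in> subF n - {0}"
    show "x * s / s = x" using s0 by simp
    show "x * s \<in> subF n - {0}" using x s s0 by (simp add: subF_mult)
    have "s * (x * s + inverse (x * s)) = s * s * x + inverse x" using s0 x
      by (simp add: field_simps)
    thus "G (psi (x * s)) = chi (T1 (inverse x + A * x))"
      by (simp add: G_def psi_def ss add.commute)
  next
    fix v :: 'a assume v: "v \<in> subF n - {0}"
    show "v / s * s = v" using s0 by simp
    show "v / s \<in> subF n - {0}" using v s s0 by (simp add: subF_div)
  qed
  finally have K: "kloosterman n A = 1 + (\<Sum>v\<in>subF n - {0}. G (psi v))" .
  have one: "(1::'a) \<in> ?U" by (simp add: U_iff)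
  have "(\<Sum>w\<in>?U. G (psi w)) = G (psi 1) + (\<Sum>w\<in>?U - {1}. G (psi w))"
    using one by (simp add: sum.remove)
  hence SU: "(\<Sum>w\<in>?U. G (psi w)) = 1 + (\<Sum>w\<in>?U - {1}. G (psi w))" using psi1 G0 by simp
  have "(\<Sum>v\<in>subF n - {0}. G (psi v)) = G (psi 1) + (\<Sum>v\<in>subF n - {0} - {1}. G (psi v))"
    by (rule sum.remove) (simp_all add: subF_1)
  moreover have "subF n - {0} - {1} = subF n - {0, (1::'a)}" by auto
  ultimately have SF: "(\<Sum>v\<in>subF n - {0}. G (psi v)) = 1 + (\<Sum>v\<in>subF n - {0, 1}. G (psi v))"
    using psi1 G0 by simp
  have "(\<Sum>w\<in>?U - {1}. G (psi w)) + (\<Sum>v\<in>subF n - {0, 1}. G (psi v)) = (\<Sum>r\<in>DD. G (psi r))"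
    unfolding DD_def by (rule sum.union_disjoint[symmetric]) (simp_all add: DD_disj)
  also have "\<dots> = 2 * (\<Sum>y\<in>subF n - {0}. G y)" by (rule sum_DD)
  also have "(\<Sum>y\<in>subF n - {0}. G y) = (\<Sum>y\<in>subF n. G y) - G 0"
    using subF_0 by (simp add: sum_diff1)
  also have "(\<Sum>y\<in>subF n. G y) = 0"
    using orth[OF s] s0 by (simp add: G_def mult.commute)
  finally have "(\<Sum>w\<in>?U - {1}. G (psi w)) + (\<Sum>v\<in>subF n - {0, 1}. G (psi v)) = -2" using G0 by simp
  thus ?thesis using LU K SU SF by simp
qed


lemma parity_sum:
  fixes h :: "'b \<Rightarrow> int"
  assumes "finite Y" "\<And>y. h y = 1 \<or> h y = -1"
  shows "even ((\<Sum>y\<in>Y. h y) + int (card Y))"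
  using assms(1)
proof (induction Y rule: finite_induct)
  case empty thus ?case by simp
next
  case (insert x F)
  have "(\<Sum>y\<in>insert x F. h y) + int (card (insert x F)) = (h x + 1) + ((\<Sum>y\<in>F. h y) + int (card F))"
    using insert by simp
  moreover have "even (h x + 1)" using assms(2)[of x] by auto
  ultimately show ?case using insert by simp
qed

lemma fibU:
  assumes w0: "w0 \<in> unit_circle n - {1::'a}"
  shows "{w\<in>unit_circle n - {1}. psi w = psi w0} = {w0, inverse w0}" "w0 \<noteq> inverse w0"
proof -
  have w00: "w0 \<noteq> 0" using w0 U_nz by blast
  show ne: "w0 \<noteq> inverse w0"
  proof
    assume "w0 = inverse w0"
    hence "w0 * w0 = 1" using w00 by (metis right_inverse)
    thus False using sq1 w0 by blast
  qed
  have iw: "inverse w0 \<in> unit_circle n - {1}" using w0 U_inv by auto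
  show "{w\<in>unit_circle n - {1}. psi w = psi w0} = {w0, inverse w0}"
  proof
    show "{w\<in>unit_circle n - {1}. psi w = psi w0} \<subseteq> {w0, inverse w0}"
    proof
      fix w assume w: "w \<in> {w\<in>unit_circle n - {1}. psi w = psi w0}"
      hence "w \<noteq> 0" "w + inverse w = w0 + inverse w0" using U_nz by (auto simp: psi_def)
      hence "w = w0 \<or> w = inverse w0" using psi_eq w00 by blast
      thus "w \<in> {w0, inverse w0}" by blast
    qed
    show "{w0, inverse w0} \<subseteq> {w\<in>unit_circle n - {1}. psi w = psi w0}"
      using w0 iw by (auto simp: psi_def add.commute)
  qed
qed

lemma mod4:
  assumes n2: "n \<ge> 2" and A: "A \<in> subF n"
  shows "(\<Sum>w\<in>unit_circle n. chi (T2 (A * w))) \<noteq> -1"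
proof -
  let ?U = "unit_circle n :: 'a set"
  let ?V = "?U - {1}"
  define G where "G y = chi (T1 (A * y))" for y
  define Y where "Y = psi ` ?V"
  have one: "(1::'a) \<in> ?U" by (simp add: U_iff)
  have "(\<Sum>w\<in>?U. chi (T2 (A * w))) = (\<Sum>w\<in>?U. G (psi w))"
  proof (rule sum.cong[OF refl])
    fix w :: 'a assume w: "w \<in> ?U"
    have "T2 (A * w) = T1 (A * (w + cj w))" using A by (rule T2_F)
    thus "chi (T2 (A * w)) = G (psi w)" using w by (simp add: G_def psi_def U_cj)
  qed
  also have "\<dots> = G (psi 1) + (\<Sum>w\<in>?V. G (psi w))" using one by (simp add: sum.remove)
  also have "G (psi 1) = 1" by (simp add: G_def psi_def chi_def)
  finally have S1: "(\<Sum>w\<in>?U. chi (T2 (A * w))) = 1 + (\<Sum>w\<in>?V. G (psi w))" .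
  have fib2: "card {w\<in>?V. psi w = y} = 2" if "y \<in> Y" for y
  proof -
    obtain w0 where w0: "w0 \<in> ?V" "y = psi w0" using \<open>y \<in> Y\<close> by (auto simp: Y_def)
    show ?thesis using fibU[OF w0(1)] w0(2) by simp
  qed
  have "(\<Sum>w\<in>?V. G (psi w)) = (\<Sum>y\<in>Y. \<Sum>w\<in>{w\<in>?V. psi w = y}. G (psi w))"
    by (rule sum.group[symmetric]) (simp_all add: Y_def)
  also have "\<dots> = (\<Sum>y\<in>Y. 2 * G y)"
  proof (rule sum.cong[OF refl])
    fix y assume y: "y \<in> Y"
    have "(\<Sum>w\<in>{w\<in>?V. psi w = y}. G (psi w)) = (\<Sum>w\<in>{w\<in>?V. psi w = y}. G y)"
      by (rule sum.cong) simp_all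
    thus "(\<Sum>w\<in>{w\<in>?V. psi w = y}. G (psi w)) = 2 * G y" using fib2[OF y] by simp
  qed
  finally have S2: "(\<Sum>w\<in>?V. G (psi w)) = 2 * (\<Sum>y\<in>Y. G y)" by (simp add: sum_distrib_left)
  have "card ?V = (\<Sum>y\<in>Y. card {w\<in>?V. psi w = y})"
  proof -
    have "card ?V = (\<Sum>w\<in>?V. 1)" by simp
    also have "\<dots> = (\<Sum>y\<in>Y. \<Sum>w\<in>{w\<in>?V. psi w = y}. 1)"
      by (rule sum.group[symmetric]) (simp_all add: Y_def)
    finally show ?thesis by simp
  qed
  also have "\<dots> = (\<Sum>y\<in>Y. 2)" using fib2 by (intro sum.cong[OF refl]) simp
  finally have "card ?V = 2 * card Y" by simp
  moreover have "card ?V = 2^n" using card_U one by (simp add: card_Diff_singleton)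
  ultimately have cY: "card Y = 2^(n-1)" using npos by (metis Suc_diff_1 mult_left_cancel power_Suc zero_neq_numeral)
  have "even (card Y)" using cY n2 by simp
  moreover have "even ((\<Sum>y\<in>Y. G y) + int (card Y))"
    by (rule parity_sum) (simp_all add: Y_def G_def chi_def)
  ultimately have ev: "even (\<Sum>y\<in>Y. G y)" by simp
  show ?thesis
  proof
    assume "(\<Sum>w\<in>?U. chi (T2 (A * w))) = -1"
    hence "(\<Sum>y\<in>Y. G y) = -1" using S1 S2 by simp
    thus False using ev by simp
  qed
qed


lemma TT_notU:
  assumes a1: "a1 \<in> subF n" "a1 \<noteq> 0" and b0: "(b::'a) \<noteq> 0" and bU: "b \<notin> unit_circle n"
  defines "\<gamma> \<equiv> 1 + b * cj b"
  defines "A \<equiv> a1 / \<gamma>"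
  shows "A \<in> subF n" "A \<noteq> 0" "\<gamma> \<noteq> 0"
    "(\<Sum>u\<in>unit_circle n. chi (T2 (a1 / (u + b)))) = chi (T2 (A * cj b)) * (1 - kloosterman n A)"
proof -
  let ?U = "unit_circle n :: 'a set"
  have beta: "b * cj b \<in> subF n" by (simp add: subF_iff cj_mult cj_cj mult.commute)
  have b1: "b * cj b \<noteq> 1" using bU by (simp add: U_iff)
  show g0: "\<gamma> \<noteq> 0" unfolding \<gamma>_def using b1 add_eq0_iff by metis
  have gF: "\<gamma> \<in> subF n" unfolding \<gamma>_def by (rule subF_add[OF subF_1 beta])
  show AF: "A \<in> subF n" unfolding A_def using a1(1) gF by (rule subF_div)
  show A0: "A \<noteq> 0" unfolding A_def using a1(2) g0 by simp
  have ub: "u + b \<noteq> 0" if "u \<in> ?U" for u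
  proof -
    have "u \<noteq> b" using that bU by blast
    thus ?thesis by (rule sum_ne0)
  qed
  define \<mu> where "\<mu> u = \<gamma> / (u + b) + cj b" for u
  have cbU: "1 + cj b * u \<noteq> 0" if u: "u \<in> ?U" for u
  proof
    assume "1 + cj b * u = 0"
    hence "cj b * u = 1" using add_eq0_iff by metis
    hence "cj b = inverse u" by (metis inverse_unique mult.commute)
    hence "cj (cj b) = inverse (cj u)" by (simp add: cj_inv)
    hence "b = u" using u by (simp add: cj_cj U_cj)
    thus False using u bU by simp
  qed
  have mu_eq: "\<mu> u = (1 + cj b * u) / (u + b)" if u: "u \<in> ?U" for u
  proof -
    have "\<mu> u = (\<gamma> + cj b * (u + b)) / (u + b)" using ub[OF u] by (simp add: \<mu>_def field_simps)
    also have "\<gamma> + cj b * (u + b) = 1 + cj b * u + (b * cj b + b * cj b)"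
      by (simp add: \<gamma>_def algebra_simps char2)
    also have "\<dots> = 1 + cj b * u" by simp
    finally show ?thesis .
  qed
  have muU: "\<mu> u \<in> ?U" if u: "u \<in> ?U" for u
  proof -
    have u0: "u \<noteq> 0" using u U_nz by blast
    have "cj (\<mu> u) = (1 + b * inverse u) / (inverse u + cj b)"
      using u by (simp add: mu_eq cj_div cj_add cj_mult cj_cj U_cj)
    also have "\<dots> = (u + b) / (1 + cj b * u)"
    proof -
      have "(1 + b * inverse u) = (u + b) * inverse u" using u0 by (simp add: field_simps)
      moreover have "(inverse u + cj b) = (1 + cj b * u) * inverse u" using u0 by (simp add: field_simps)
      ultimately show ?thesis using u0 by simp
    qed
    finally have "\<mu> u * cj (\<mu> u) = ((1 + cj b * u) / (u + b)) * ((u + b) / (1 + cj b * u))"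
      using mu_eq[OF u] by simp
    also have "\<dots> = 1" using ub[OF u] cbU[OF u] by simp
    finally show ?thesis by (simp add: U_iff)
  qed
  have inj: "inj_on \<mu> ?U"
  proof (rule inj_onI)
    fix u v assume u: "u \<in> ?U" and v: "v \<in> ?U" and e: "\<mu> u = \<mu> v"
    hence "\<gamma> / (u + b) = \<gamma> / (v + b)" by (simp add: \<mu>_def)
    hence "u + b = v + b" using g0 ub[OF u] ub[OF v] by (simp add: field_simps)
    thus "u = v" by simp
  qed
  have img: "\<mu> ` ?U = ?U" by (rule endo_inj_surj) (use muU inj in auto)
  have "(\<Sum>u\<in>?U. chi (T2 (a1 / (u + b)))) = (\<Sum>u\<in>?U. chi (T2 (A * \<mu> u)) * chi (T2 (A * cj b)))"
  proof (rule sum.cong[OF refl])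
    fix u assume u: "u \<in> ?U"
    have "A * \<mu> u = a1 / (u + b) + A * cj b"
      using g0 ub[OF u] by (simp add: A_def \<mu>_def field_simps)
    hence "a1 / (u + b) = A * \<mu> u + A * cj b" by (simp add: add.assoc)
    hence "T2 (a1 / (u + b)) = T2 (A * \<mu> u) + T2 (A * cj b)" by (simp add: T2_add)
    thus "chi (T2 (a1 / (u + b))) = chi (T2 (A * \<mu> u)) * chi (T2 (A * cj b))"
      by (simp add: chi_add bit_T2)
  qed
  also have "\<dots> = chi (T2 (A * cj b)) * (\<Sum>u\<in>?U. chi (T2 (A * \<mu> u)))"
    by (simp add: sum_distrib_right mult.commute)
  also have "(\<Sum>u\<in>?U. chi (T2 (A * \<mu> u))) = (\<Sum>w\<in>\<mu> ` ?U. chi (T2 (A * w)))"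
    by (simp add: sum.reindex[OF inj])
  also have "\<dots> = 1 - kloosterman n A" unfolding img by (rule kl_id[OF AF A0])
  finally show "(\<Sum>u\<in>?U. chi (T2 (a1 / (u + b)))) = chi (T2 (A * cj b)) * (1 - kloosterman n A)" .
qed

lemma E_id:
  assumes a1: "a1 \<in> subF n" and b0: "(b::'a) \<noteq> 0" and g0: "1 + b * cj b \<noteq> 0"
  shows "T2 (a1 / (1 + b * cj b) * cj b) + T2 (a1 / b) =
         T1 (a1 * (b + cj b) / ((1 + b * cj b) * (b * cj b)))"
proof -
  let ?g = "1 + b * cj b" and ?be = "b * cj b"
  have cb0: "cj b \<noteq> 0" using b0 by simp
  have gF: "?g \<in> subF n" using subF_1 by (simp add: subF_add subF_iff cj_mult cj_cj cj_add mult.commute)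
  have AF: "a1 / ?g \<in> subF n" using a1 gF by (rule subF_div)
  have "T2 (a1 / ?g * cj b) = T1 (a1 / ?g * (cj b + b))" using T2_F[OF AF, of "cj b"] by (simp only: cj_cj)
  moreover have "T2 (a1 / b) = T1 (a1 * (inverse b + inverse (cj b)))"
    using a1 T2_F[of a1 "inverse b"] by (simp add: cj_inv divide_inverse)
  ultimately have "T2 (a1 / ?g * cj b) + T2 (a1 / b) = T1 (a1 / ?g * (cj b + b) + a1 * (inverse b + inverse (cj b)))"
    by (simp add: T1_add)
  also have "a1 / ?g * (cj b + b) + a1 * (inverse b + inverse (cj b)) = a1 * (b + cj b) * (1 / ?g + 1 / ?be)"
    using b0 cb0 by (simp add: field_simps)
  also have "1 / ?g + 1 / ?be = (?be + ?g) / (?g * ?be)" using b0 cb0 g0 by (simp add: field_simps)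
  also have "?be + ?g = 1" by (metis add.left_commute add_self add_0_right)
  finally show ?thesis by simp
qed


lemma abs_sum_chi: "\<bar>\<Sum>u\<in>S. chi (h u)\<bar> \<le> int (card S)"
proof -
  have "\<bar>\<Sum>u\<in>S. chi (h u)\<bar> \<le> (\<Sum>u\<in>S. \<bar>chi (h u)\<bar>)" by (rule sum_abs)
  also have "\<dots> = (\<Sum>u\<in>S. 1)" by (rule sum.cong) (simp_all add: chi_def)
  finally show ?thesis by simp
qed

lemma main:
  assumes a1: "a1 \<in> subF n" "a1 \<noteq> 0" and b0: "(b::'a) \<noteq> 0"
  shows "bent (2 * n) (\<lambda>x. tr 1 (2 * n) (a1 / (x ^ (2 ^ n - 1) + b)))
    \<longleftrightarrow>
     ((b \<in> unit_circle n - {1} \<and> tr 1 (2 * n) (a1 / b) = 0) \<or>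
      (b \<notin> unit_circle n \<and>
       kloosterman n (a1 / (1 + b * b ^ (2 ^ n))) = 0 \<and>
       tr 1 n (a1 * (b + b ^ (2 ^ n)) / ((1 + b * b ^ (2 ^ n)) * (b * b ^ (2 ^ n)))) = 0))"
proof -
  let ?U = "unit_circle n :: 'a set"
  define G where "G u = T2 (a1 / (u + b))" for u
  define TT where "TT = (\<Sum>u\<in>?U. chi (G u))"
  have bitG: "\<And>u. isbit (G u)" by (simp add: G_def bit_T2)
  have fx: "(\<lambda>x. tr 1 (2 * n) (a1 / (x ^ (2 ^ n - 1) + b))) = (\<lambda>x. G (x ^ qm1))"
    unfolding G_def tr_T2 qm1_def by (rule refl)
  have bent_iff: "bent (2 * n) (\<lambda>x. G (x ^ qm1)) \<longleftrightarrow> (\<forall>w. (\<Sum>x\<in>UNIV. chi (G (x^qm1) + T2 (w*x)))^2 = 2^(2*n))"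
    unfolding bent_def walsh_def tr_T2 by simp
  have G0: "G 0 = T2 (a1 / b)" by (simp add: G_def)
  have crit: "bent (2 * n) (\<lambda>x. G (x ^ qm1)) \<longleftrightarrow> TT = chi (G 0)" if small: "\<bar>TT - chi (G 0)\<bar> < 2 * 2^n"
    unfolding bent_iff TT_def by (rule bent_crit[OF bitG]) (use small in \<open>simp add: TT_def\<close>)
  have c2: "(2::int) \<le> 2^n" using q_ge2 by (metis of_nat_le_iff of_nat_numeral of_nat_power)
  have goal: "bent (2 * n) (\<lambda>x. G (x ^ qm1)) \<longleftrightarrow>
     ((b \<in> unit_circle n - {1} \<and> T2 (a1 / b) = 0) \<or>
      (b \<notin> unit_circle n \<and>
       kloosterman n (a1 / (1 + b * b ^ (2 ^ n))) = 0 \<and>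
       T1 (a1 * (b + b ^ (2 ^ n)) / ((1 + b * b ^ (2 ^ n)) * (b * b ^ (2 ^ n)))) = 0))"
  proof (cases "b \<in> ?U")
    case bU: True
    show ?thesis
    proof (cases "b = 1")
      case True
      have TT: "TT = 1 + 2^n * chi (T1 a1)" unfolding TT_def G_def True by (rule TT_1[OF a1(1)])
      have c: "chi (G 0) = 1" using a1 by (simp add: G0 True T2_subF chi_def)
      have d: "TT - chi (G 0) = 2^n * chi (T1 a1)" using TT c by simp
      have "\<bar>TT - chi (G 0)\<bar> = 2^n" unfolding d using chi_pm[of "T1 a1"] by auto
      hence "\<bar>TT - chi (G 0)\<bar> < 2 * 2^n" by simp
      moreover have "TT \<noteq> chi (G 0)" using d chi_pm[of "T1 a1"] by auto
      ultimately show ?thesis using crit True by (simp add: U_iff)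
    next
      case False
      have TT: "TT = 1" unfolding TT_def G_def by (rule TT_U[OF a1 bU False])
      have "\<bar>TT - chi (G 0)\<bar> \<le> 2" using TT chi_pm[of "G 0"] by auto
      hence "\<bar>TT - chi (G 0)\<bar> < 2 * 2^n" using c2 by linarith
      hence "bent (2 * n) (\<lambda>x. G (x ^ qm1)) \<longleftrightarrow> T2 (a1 / b) = 0"
        using crit TT by (simp add: G0 chi_def)
      thus ?thesis using bU False by simp
    qed
  next
    case bU: False
    have n2: "n \<ge> 2" using n1_U[OF _ b0] bU npos by (cases "n = 1") auto
    have c4: "(4::int) \<le> 2^n"
    proof -
      have "(2::int)^2 \<le> 2^n" using n2 by (rule power_increasing) simp
      thus ?thesis by simp
    qed
    define A where "A = a1 / (1 + b * cj b)"
    define E where "E = T1 (a1 * (b + cj b) / ((1 + b * cj b) * (b * cj b)))"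
    define K where "K = kloosterman n A"
    note tt = TT_notU[OF a1 b0 bU]
    have AF: "A \<in> subF n" and A0: "A \<noteq> 0" and g0: "1 + b * cj b \<noteq> 0" using tt by (simp_all add: A_def)
    have TT: "TT = chi (T2 (A * cj b)) * (1 - K)" using tt(4) by (simp add: TT_def G_def A_def K_def)
    have "\<bar>TT\<bar> \<le> 2^n + 1" using abs_sum_chi[where S="?U" and h=G] card_U by (simp add: TT_def)
    hence "\<bar>TT - chi (G 0)\<bar> < 2 * 2^n" using c4 chi_pm[of "G 0"] by auto
    hence bent: "bent (2 * n) (\<lambda>x. G (x ^ qm1)) \<longleftrightarrow> TT = chi (G 0)" by (rule crit)
    have EC: "chi (T2 (A * cj b)) * chi (G 0) = chi E"
      using E_id[OF a1(1) b0 g0] by (simp add: chi_add[symmetric] bit_T2 G0 A_def E_def)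
    have "TT = chi (G 0) \<longleftrightarrow> 1 - K = chi E"
    proof -
      have "TT = chi (G 0) \<longleftrightarrow> chi (T2 (A * cj b)) * TT = chi (T2 (A * cj b)) * chi (G 0)"
        using chi_pm[of "T2 (A * cj b)"] by auto
      also have "chi (T2 (A * cj b)) * TT = 1 - K"
        unfolding TT by (simp only: mult.assoc[symmetric] chi_sq mult_1)
      finally show ?thesis using EC by simp
    qed
    also have "\<dots> \<longleftrightarrow> K = 0 \<and> E = 0"
    proof (cases "E = 0")
      case True thus ?thesis by (simp add: chi_def)
    next
      case False
      have "1 - K \<noteq> -1" using mod4[OF n2 AF] kl_id[OF AF A0] by (simp add: K_def)
      thus ?thesis using False by (simp add: chi_def)
    qed
    finally show ?thesis using bent bU by (simp add: K_def A_def E_def)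
  qed
  have fx': "(\<lambda>x. T2 (a1 / (x ^ (2 ^ n - 1) + b))) = (\<lambda>x. G (x ^ qm1))"
    unfolding G_def qm1_def by (rule refl)
  show ?thesis unfolding tr_T2 tr_T1 fx' by (rule goal)
qed

end

theorem theorem1:
  fixes n :: nat and a1 b :: "'a::{field,finite}"
  assumes "n > 0"
    and "card (UNIV :: 'a set) = 2 ^ (2 * n)"
    and "a1 \<in> subF n" and "a1 \<noteq> 0"
    and "b \<noteq> 0"
  shows "bent (2 * n) (\<lambda>x. tr 1 (2 * n) (a1 / (x ^ (2 ^ n - 1) + b)))
    \<longleftrightarrow>
     ((b \<in> unit_circle n - {1} \<and> tr 1 (2 * n) (a1 / b) = 0) \<or>
      (b \<notin> unit_circle n \<and>
       kloosterman n (a1 / (1 + b * b ^ (2 ^ n))) = 0 \<and>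
       tr 1 n (a1 * (b + b ^ (2 ^ n)) / ((1 + b * b ^ (2 ^ n)) * (b * b ^ (2 ^ n)))) = 0))"
proof -
  interpret gf n "TYPE('a)" by unfold_locales (use assms in auto)
  show ?thesis by (rule main) (use assms in auto)
qed

end
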